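(* Let $G$ be a finite group acting on a closed connected manifold $M$, let $\ell$ be a prime, and suppose the action of $G$ on $M$ is $\mathbb{F}_\ell$-homologically wide. Then for every subgroup $H_1\le G$, the $\mathbb{F}_\ell[G]$-module $(\mathrm{Ind}^G_{H_1}\mathbf{1})\otimes_{\mathbb{Z}}\mathbb{F}_\ell$ is an $\mathbb{F}_\ell[G]$-submodule of $\mathrm{H}_1(M,\mathbb{F}_\ell)$; and if $\ell$ does not divide $|G|$, it is also a quotient $\mathbb{F}_\ell[G]$-module of $\mathrm{H}_1(M,\mathbb{F}_\ell)$.
   Context: The action of $G$ on $M$ is $\mathbb{F}_\ell$-homologically wide if the representation of $G$ on $\mathrm{H}_1(M,\mathbb{F}_\ell)$ induced by the action contains the regular representation $\mathbb{F}_\ell[G]$, i.e. there is $\omega\in\mathrm{H}_1(M,\mathbb{F}_\ell)$ with the $|G|$ classes $g\omega$ ($g\in G$) linearly independent. $\mathrm{Ind}^G_{H_1}\mathbf{1}$ is the permutation module $\mathbb{Z}[G/H_1]$. *)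

theory Defs
  imports "HOL-Homology.Homology" "HOL-Algebra.Group_Action" "HOL-Analysis.Abstract_Topological_Spaces" "HOL-Computational_Algebra.Primes"
begin

definition locally_euclidean :: "nat \<Rightarrow> 'a topology \<Rightarrow> bool" where
  "locally_euclidean n M \<longleftrightarrow>
     (\<forall>x\<in>topspace M. \<exists>U V. openin M U \<and> x \<in> U \<and> openin (Euclidean_space n) V \<and>
        subtopology M U homeomorphic_space subtopology (Euclidean_space n) V)"

definition closed_connected_manifold :: "'a topology \<Rightarrow> bool" where
  "closed_connected_manifold M \<longleftrightarrow>
     (\<exists>n. locally_euclidean n M) \<and> Hausdorff_space M \<and> second_countable M \<and>
     compact_space M \<and> connected_space M \<and> topspace M \<noteq> {}"

definition homeo_action :: "('g, 'b) monoid_scheme \<Rightarrow> 'a topology \<Rightarrow> ('g \<Rightarrow> 'a \<Rightarrow> 'a) \<Rightarrow> bool" where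
  "homeo_action G M \<phi> \<longleftrightarrow>
     group_action G (topspace M) \<phi> \<and> (\<forall>g\<in>carrier G. homeomorphic_map M M (\<phi> g))"

text \<open>With C_k the integral singular chains, H_1(M;F_l) = Z/B where
  Z = {c in C_1. boundary c in l C_0} and B = l C_1 + boundary(C_2).\<close>

definition mod_cycle :: "nat \<Rightarrow> 'a topology \<Rightarrow> 'a chain \<Rightarrow> bool" where
  "mod_cycle l M c \<longleftrightarrow> singular_chain 1 M c \<and>
     (\<forall>s. int l dvd poly_mapping.lookup (chain_boundary 1 c) s)"

definition mod_boundary :: "nat \<Rightarrow> 'a topology \<Rightarrow> 'a chain \<Rightarrow> bool" where
  "mod_boundary l M c \<longleftrightarrow> (\<exists>a b. singular_chain 1 M a \<and> singular_chain 2 M b \<and>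
     c = frag_cmul (int l) a + chain_boundary 2 b)"

text \<open>Equality of classes in H_1(M;F_l).\<close>
definition mod_homologous :: "nat \<Rightarrow> 'a topology \<Rightarrow> 'a chain \<Rightarrow> 'a chain \<Rightarrow> bool" where
  "mod_homologous l M c d \<longleftrightarrow> mod_boundary l M (c - d)"

definition act_chain :: "('g \<Rightarrow> 'a \<Rightarrow> 'a) \<Rightarrow> 'g \<Rightarrow> 'a chain \<Rightarrow> 'a chain" where
  "act_chain \<phi> g c = chain_map 1 (\<phi> g) c"

text \<open>Homologically wide: some class omega whose translates g omega (g in G) are
  F_l-linearly independent in H_1(M;F_l).\<close>
definition homologically_wide ::
    "nat \<Rightarrow> ('g, 'b) monoid_scheme \<Rightarrow> 'a topology \<Rightarrow> ('g \<Rightarrow> 'a \<Rightarrow> 'a) \<Rightarrow> bool" where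
  "homologically_wide l G M \<phi> \<longleftrightarrow>
     (\<exists>\<omega>. mod_cycle l M \<omega> \<and>
        (\<forall>a :: 'g \<Rightarrow> int.
           mod_boundary l M (\<Sum>g\<in>carrier G. frag_cmul (a g) (act_chain \<phi> g \<omega>))
           \<longrightarrow> (\<forall>g\<in>carrier G. int l dvd a g)))"

text \<open>Left cosets gH, the standard basis of Ind_H^G 1 = Z[G/H]; G acts by left translation.\<close>
definition left_cosets :: "('g, 'b) monoid_scheme \<Rightarrow> 'g set \<Rightarrow> 'g set set" where
  "left_cosets G H = (\<lambda>g. g <#\<^bsub>G\<^esub> H) ` carrier G"

text \<open>An F_l[G]-linear map F_l[G/H] -> H_1(M;F_l) is given by the (mod l cycle
  representatives of the) images f C of the basis vectors C; it is G-equivariant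
  iff g_* (f C) and f (gC) are homologous mod l; it is injective iff
  sum_C a_C f(C) in B forces all a_C = 0 in F_l.\<close>
definition perm_submodule ::
    "nat \<Rightarrow> ('g, 'b) monoid_scheme \<Rightarrow> 'g set \<Rightarrow> 'a topology \<Rightarrow> ('g \<Rightarrow> 'a \<Rightarrow> 'a) \<Rightarrow> bool" where
  "perm_submodule l G H M \<phi> \<longleftrightarrow>
     (\<exists>f :: 'g set \<Rightarrow> 'a chain.
        (\<forall>C\<in>left_cosets G H. mod_cycle l M (f C)) \<and>
        (\<forall>g\<in>carrier G. \<forall>C\<in>left_cosets G H.
            mod_homologous l M (act_chain \<phi> g (f C)) (f (g <#\<^bsub>G\<^esub> C))) \<and>
        (\<forall>a :: 'g set \<Rightarrow> int.
            mod_boundary l M (\<Sum>C\<in>left_cosets G H. frag_cmul (a C) (f C))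
            \<longrightarrow> (\<forall>C\<in>left_cosets G H. int l dvd a C)))"

text \<open>An F_l[G]-linear surjection H_1(M;F_l) -> F_l[G/H], given on cycle
  representatives: q z is the coefficient vector (integers read mod l).
  It is additive, vanishes on B (so is well defined on classes), is
  G-equivariant ((g x)(gC) = x(C)), and is surjective.\<close>
definition perm_quotient ::
    "nat \<Rightarrow> ('g, 'b) monoid_scheme \<Rightarrow> 'g set \<Rightarrow> 'a topology \<Rightarrow> ('g \<Rightarrow> 'a \<Rightarrow> 'a) \<Rightarrow> bool" where
  "perm_quotient l G H M \<phi> \<longleftrightarrow>
     (\<exists>q :: 'a chain \<Rightarrow> 'g set \<Rightarrow> int.
        (\<forall>z w. mod_cycle l M z \<longrightarrow> mod_cycle l M w \<longrightarrow>
            (\<forall>C\<in>left_cosets G H. int l dvd (q (z + w) C - (q z C + q w C)))) \<and>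
        (\<forall>b. mod_boundary l M b \<longrightarrow> (\<forall>C\<in>left_cosets G H. int l dvd q b C)) \<and>
        (\<forall>g\<in>carrier G. \<forall>z. mod_cycle l M z \<longrightarrow>
            (\<forall>C\<in>left_cosets G H.
               int l dvd (q (act_chain \<phi> g z) (g <#\<^bsub>G\<^esub> C) - q z C))) \<and>
        (\<forall>x :: 'g set \<Rightarrow> int. \<exists>z. mod_cycle l M z \<and>
            (\<forall>C\<in>left_cosets G H. int l dvd (q z C - x C))))"

end

theory Submission
  imports Defs
begin


lemma mb_0: "mod_boundary l M 0"
  unfolding mod_boundary_def by (rule exI[of _ 0], rule exI[of _ 0]) simp

lemma mb_add:
  assumes "mod_boundary l M x" "mod_boundary l M y"
  shows "mod_boundary l M (x + y)"
proof -
  obtain a b where ab: "singular_chain 1 M a" "singular_chain 2 M b"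
    "x = frag_cmul (int l) a + chain_boundary 2 b" using assms(1) unfolding mod_boundary_def by blast
  obtain a' b' where ab': "singular_chain 1 M a'" "singular_chain 2 M b'"
    "y = frag_cmul (int l) a' + chain_boundary 2 b'" using assms(2) unfolding mod_boundary_def by blast
  show ?thesis unfolding mod_boundary_def
    apply (rule exI[of _ "a + a'"], rule exI[of _ "b + b'"])
    using ab ab' by (simp add: singular_chain_add frag_cmul_distrib2 chain_boundary_add algebra_simps)
qed

lemma mb_cmul:
  assumes "mod_boundary l M x"
  shows "mod_boundary l M (frag_cmul k x)"
proof -
  obtain a b where ab: "singular_chain 1 M a" "singular_chain 2 M b"
    "x = frag_cmul (int l) a + chain_boundary 2 b" using assms(1) unfolding mod_boundary_def by blast
  show ?thesis unfolding mod_boundary_def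
    apply (rule exI[of _ "frag_cmul k a"], rule exI[of _ "frag_cmul k b"])
    using ab by (simp add: singular_chain_cmul frag_cmul_distrib2 chain_boundary_cmul mult.commute)
qed

lemma mb_diff:
  assumes "mod_boundary l M x" "mod_boundary l M y"
  shows "mod_boundary l M (x - y)"
  using mb_add[OF assms(1) mb_cmul[OF assms(2), of "-1"]] by simp

lemma mb_sum:
  assumes "\<And>i. i \<in> I \<Longrightarrow> mod_boundary l M (f i)"
  shows "mod_boundary l M (sum f I)"
  using assms
proof (induction I rule: infinite_finite_induct)
  case (infinite A) then show ?case by (simp add: mb_0)
next
  case empty then show ?case by (simp add: mb_0)
next
  case (insert x F) then show ?case by (simp add: mb_add)
qed

lemma mb_sc: "mod_boundary l M x \<Longrightarrow> singular_chain 1 M x"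
  unfolding mod_boundary_def
  using singular_chain_boundary[of 2 M] singular_chain_add singular_chain_cmul
  by (metis One_nat_def diff_Suc_1 numeral_2_eq_2)

lemma mb_l: "singular_chain 1 M z \<Longrightarrow> mod_boundary l M (frag_cmul (int l) z)"
  unfolding mod_boundary_def by (rule exI[of _ z], rule exI[of _ 0]) simp

lemma dv_ex:
  assumes "\<forall>s. int l dvd poly_mapping.lookup c s"
  shows "\<exists>e. c = frag_cmul (int l) e"
proof -
  have fin: "finite {s. poly_mapping.lookup c s div int l \<noteq> 0}"
    by (rule finite_subset[of _ "Poly_Mapping.keys c"]) (auto simp: in_keys_iff)
  define e where "e = Abs_poly_mapping (\<lambda>s. poly_mapping.lookup c s div int l)"
  have "c = frag_cmul (int l) e"
    by (rule poly_mapping_eqI) (use assms fin in \<open>simp add: e_def\<close>)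
  then show ?thesis by blast
qed

lemma mc_0: "mod_cycle l M 0"
  unfolding mod_cycle_def by simp

lemma mc_add: "mod_cycle l M x \<Longrightarrow> mod_cycle l M y \<Longrightarrow> mod_cycle l M (x + y)"
  unfolding mod_cycle_def by (simp add: singular_chain_add chain_boundary_add lookup_add)

lemma mc_cmul: "mod_cycle l M x \<Longrightarrow> mod_cycle l M (frag_cmul k x)"
  unfolding mod_cycle_def by (simp add: singular_chain_cmul chain_boundary_cmul)

lemma mc_sum:
  assumes "\<And>i. i \<in> I \<Longrightarrow> mod_cycle l M (f i)"
  shows "mod_cycle l M (sum f I)"
  using assms
proof (induction I rule: infinite_finite_induct)
  case (infinite A) then show ?case by (simp add: mc_0)
next
  case empty then show ?case by (simp add: mc_0)
next
  case (insert x F) then show ?case by (simp add: mc_add)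
qed

lemma map_sc: "singular_chain 1 M c \<Longrightarrow> continuous_map M M f \<Longrightarrow> singular_chain 1 M (chain_map 1 f c)"
  by (rule singular_chain_chain_map)

lemma map_mb:
  assumes "mod_boundary l M x" "continuous_map M M f"
  shows "mod_boundary l M (chain_map 1 f x)"
proof -
  obtain a b where ab: "singular_chain 1 M a" "singular_chain 2 M b"
    "x = frag_cmul (int l) a + chain_boundary 2 b" using assms(1) unfolding mod_boundary_def by blast
  have "chain_map 1 f (chain_boundary 2 b) = chain_boundary 2 (chain_map 2 f b)"
    using chain_boundary_chain_map[OF ab(2), of f] by (simp add: numeral_2_eq_2)
  then show ?thesis unfolding mod_boundary_def
    apply (rule_tac exI[of _ "chain_map 1 f a"], rule_tac exI[of _ "chain_map 2 f b"])
    using ab assms(2) by (simp add: chain_map_add singular_chain_chain_map)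
qed

lemma map_mc:
  assumes "mod_cycle l M x" "continuous_map M M f"
  shows "mod_cycle l M (chain_map 1 f x)"
proof -
  have sc: "singular_chain 1 M x" and dv: "\<forall>s. int l dvd poly_mapping.lookup (chain_boundary 1 x) s"
    using assms(1) unfolding mod_cycle_def by auto
  obtain e where e: "chain_boundary 1 x = frag_cmul (int l) e" using dv_ex[OF dv] by blast
  have "chain_boundary 1 (chain_map 1 f x) = chain_map 0 f (chain_boundary 1 x)"
    using chain_boundary_chain_map[OF sc, of f] by simp
  also have "\<dots> = frag_cmul (int l) (chain_map 0 f e)" by (simp only: e chain_map_cmul)
  finally show ?thesis unfolding mod_cycle_def
    using sc assms(2) by (simp add: singular_chain_chain_map)
qed



lemma ha_ga: "homeo_action G M \<phi> \<Longrightarrow> group_action G (topspace M) \<phi>"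
  unfolding homeo_action_def by blast

lemma ha_cont: "homeo_action G M \<phi> \<Longrightarrow> g \<in> carrier G \<Longrightarrow> continuous_map M M (\<phi> g)"
  unfolding homeo_action_def using homeomorphic_imp_continuous_map by metis

lemma act_comp:
  assumes "homeo_action G M \<phi>" "g \<in> carrier G" "h \<in> carrier G" "singular_chain 1 M c"
  shows "act_chain \<phi> g (act_chain \<phi> h c) = act_chain \<phi> (g \<otimes>\<^bsub>G\<^esub> h) c"
proof -
  interpret group_action G "topspace M" \<phi> using ha_ga[OF assms(1)] .
  have "act_chain \<phi> g (act_chain \<phi> h c) = chain_map 1 (\<phi> g \<circ> \<phi> h) c"
    unfolding act_chain_def by (simp add: chain_map_compose)
  also have "\<dots> = chain_map 1 (\<phi> (g \<otimes>\<^bsub>G\<^esub> h)) c"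
    by (rule chain_map_eq[OF assms(4)]) (simp add: composition_rule[OF _ assms(2,3)])
  finally show ?thesis unfolding act_chain_def .
qed

lemma act_one:
  assumes "homeo_action G M \<phi>" "singular_chain 1 M c"
  shows "act_chain \<phi> \<one>\<^bsub>G\<^esub> c = c"
proof -
  interpret group_action G "topspace M" \<phi> using ha_ga[OF assms(1)] .
  show ?thesis unfolding act_chain_def
    by (rule chain_map_id_gen[OF assms(2)]) (simp add: fun_cong[OF id_eq_one, symmetric])
qed

lemma act_sc: "homeo_action G M \<phi> \<Longrightarrow> g \<in> carrier G \<Longrightarrow> singular_chain 1 M c \<Longrightarrow> singular_chain 1 M (act_chain \<phi> g c)"
  unfolding act_chain_def using singular_chain_chain_map ha_cont by metis

lemma act_mb: "homeo_action G M \<phi> \<Longrightarrow> g \<in> carrier G \<Longrightarrow> mod_boundary l M c \<Longrightarrow> mod_boundary l M (act_chain \<phi> g c)"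
  unfolding act_chain_def using map_mb ha_cont by metis

lemma act_mc: "homeo_action G M \<phi> \<Longrightarrow> g \<in> carrier G \<Longrightarrow> mod_cycle l M c \<Longrightarrow> mod_cycle l M (act_chain \<phi> g c)"
  unfolding act_chain_def using map_mc ha_cont by metis

lemma act_add: "act_chain \<phi> g (x + y) = act_chain \<phi> g x + act_chain \<phi> g y"
  unfolding act_chain_def by (simp add: chain_map_add)

lemma act_cmul: "act_chain \<phi> g (frag_cmul k x) = frag_cmul k (act_chain \<phi> g x)"
  unfolding act_chain_def by simp

lemma act_sum: "finite I \<Longrightarrow> act_chain \<phi> g (sum f I) = (\<Sum>i\<in>I. act_chain \<phi> g (f i))"
  unfolding act_chain_def by (simp add: chain_map_sum o_def)

lemma lc_sub: "group G \<Longrightarrow> subgroup H G \<Longrightarrow> C \<in> left_cosets G H \<Longrightarrow> C \<subseteq> carrier G"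
proof -
  assume a: "group G" "subgroup H G" "C \<in> left_cosets G H"
  then obtain x where x: "x \<in> carrier G" "C = x <#\<^bsub>G\<^esub> H" unfolding left_cosets_def by blast
  show ?thesis unfolding x(2) by (rule group.l_coset_subset_G[OF a(1) subgroup.subset[OF a(2)] x(1)])
qed

lemma lc_fin: "group G \<Longrightarrow> subgroup H G \<Longrightarrow> finite (carrier G) \<Longrightarrow> C \<in> left_cosets G H \<Longrightarrow> finite C"
  by (rule finite_subset[OF lc_sub]) 

lemma lcs_fin: "finite (carrier G) \<Longrightarrow> finite (left_cosets G H)"
  unfolding left_cosets_def by simp

lemma lc_self: "group G \<Longrightarrow> subgroup H G \<Longrightarrow> y \<in> carrier G \<Longrightarrow> y \<in> y <#\<^bsub>G\<^esub> H"
proof -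
  assume a: "group G" "subgroup H G" "y \<in> carrier G"
  have "y \<otimes>\<^bsub>G\<^esub> \<one>\<^bsub>G\<^esub> \<in> y <#\<^bsub>G\<^esub> H" unfolding l_coset_def using subgroup.one_closed[OF a(2)] by blast
  then show ?thesis using a by (simp add: group.is_monoid monoid.r_one)
qed

lemma lc_self': "group G \<Longrightarrow> subgroup H G \<Longrightarrow> y \<in> carrier G \<Longrightarrow> y <#\<^bsub>G\<^esub> H \<in> left_cosets G H"
  unfolding left_cosets_def by blast

lemma lc_eq:
  assumes "group G" "subgroup H G" "C \<in> left_cosets G H" "y \<in> C"
  shows "C = y <#\<^bsub>G\<^esub> H"
proof -
  interpret group G by fact
  obtain x where x: "x \<in> carrier G" "C = x <#\<^bsub>G\<^esub> H" using assms(3) unfolding left_cosets_def by blast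
  have "x <#\<^bsub>G\<^esub> H = y <#\<^bsub>G\<^esub> H"
    by (rule l_repr_independence[OF _ x(1) assms(2)]) (use assms(4) x(2) in simp)
  then show ?thesis using x(2) by simp
qed



lemma lc_mult:
  assumes "group G" "subgroup H G" "g \<in> carrier G" "C \<in> left_cosets G H"
  shows "g <#\<^bsub>G\<^esub> C \<in> left_cosets G H" "(\<lambda>x. g \<otimes>\<^bsub>G\<^esub> x) ` C = g <#\<^bsub>G\<^esub> C"
    "inj_on (\<lambda>x. g \<otimes>\<^bsub>G\<^esub> x) C"
proof -
  obtain x where x: "x \<in> carrier G" "C = x <#\<^bsub>G\<^esub> H" using assms(4) unfolding left_cosets_def by blast
  have "g <#\<^bsub>G\<^esub> C = (g \<otimes>\<^bsub>G\<^esub> x) <#\<^bsub>G\<^esub> H"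
    unfolding x(2) by (rule group.lcos_m_assoc[OF assms(1) subgroup.subset[OF assms(2)] assms(3) x(1)])
  moreover have "g \<otimes>\<^bsub>G\<^esub> x \<in> carrier G" using assms(1,3) x(1) by (simp add: group.is_monoid monoid.m_closed)
  ultimately show "g <#\<^bsub>G\<^esub> C \<in> left_cosets G H" unfolding left_cosets_def by simp
  show "(\<lambda>x. g \<otimes>\<^bsub>G\<^esub> x) ` C = g <#\<^bsub>G\<^esub> C" unfolding l_coset_def by auto
  show "inj_on (\<lambda>x. g \<otimes>\<^bsub>G\<^esub> x) C"
    by (rule inj_on_subset[OF group.inj_on_cmult[OF assms(1,3)] lc_sub[OF assms(1,2,4)]])
qed

lemma lc_fiber:
  assumes "group G" "subgroup H G" "C \<in> left_cosets G H"
  shows "{x. x \<in> carrier G \<and> x <#\<^bsub>G\<^esub> H = C} = C"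
proof -
  have 1: "x \<in> C" if "x \<in> carrier G" "x <#\<^bsub>G\<^esub> H = C" for x
    using lc_self[OF assms(1,2) that(1)] that(2) by simp
  have 2: "x \<in> carrier G \<and> x <#\<^bsub>G\<^esub> H = C" if "x \<in> C" for x
    using lc_sub[OF assms] lc_eq[OF assms that] that by auto
  show ?thesis using 1 2 by auto
qed

lemma regroup:
  assumes "group G" "subgroup H G" "finite (carrier G)"
  shows "(\<Sum>C\<in>left_cosets G H. \<Sum>x\<in>C. F C x) = (\<Sum>x\<in>carrier G. F (x <#\<^bsub>G\<^esub> H) x)"
proof -
  have "(\<Sum>C\<in>left_cosets G H. \<Sum>x\<in>C. F C x) =
        (\<Sum>C\<in>left_cosets G H. \<Sum>x\<in>{x. x \<in> carrier G \<and> x <#\<^bsub>G\<^esub> H = C}. F (x <#\<^bsub>G\<^esub> H) x)"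
  proof (rule sum.cong[OF refl])
    fix C assume C: "C \<in> left_cosets G H"
    show "(\<Sum>x\<in>C. F C x) = (\<Sum>x\<in>{x. x \<in> carrier G \<and> x <#\<^bsub>G\<^esub> H = C}. F (x <#\<^bsub>G\<^esub> H) x)"
      unfolding lc_fiber[OF assms(1,2) C]
      by (rule sum.cong[OF refl]) (use lc_eq[OF assms(1,2) C] in simp)
  qed
  also have "\<dots> = (\<Sum>x\<in>carrier G. F (x <#\<^bsub>G\<^esub> H) x)"
    by (rule sum.group[OF assms(3) lcs_fin[OF assms(3)]]) (auto simp: left_cosets_def)
  finally show ?thesis .
qed

lemma submod:
  assumes gr: "group G" and fin: "finite (carrier G)" and ha: "homeo_action G M \<phi>"
    and H: "subgroup H G" and om: "mod_cycle l M \<omega>"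
    and wide: "\<forall>a :: 'g \<Rightarrow> int.
           mod_boundary l M (\<Sum>g\<in>carrier G. frag_cmul (a g) (act_chain \<phi> g \<omega>))
           \<longrightarrow> (\<forall>g\<in>carrier G. int l dvd a g)"
  shows "perm_submodule l G H M \<phi>"
proof -
  have scw: "singular_chain 1 M \<omega>" using om unfolding mod_cycle_def by simp
  define f where "f C = (\<Sum>x\<in>C. act_chain \<phi> x \<omega>)" for C
  have i: "\<forall>C\<in>left_cosets G H. mod_cycle l M (f C)"
  proof
    fix C assume C: "C \<in> left_cosets G H"
    show "mod_cycle l M (f C)" unfolding f_def
      by (rule mc_sum, rule act_mc[OF ha _ om]) (use lc_sub[OF gr H C] in blast)
  qed
  have ii: "\<forall>g\<in>carrier G. \<forall>C\<in>left_cosets G H.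
            mod_homologous l M (act_chain \<phi> g (f C)) (f (g <#\<^bsub>G\<^esub> C))"
  proof (intro ballI)
    fix g C assume g: "g \<in> carrier G" and C: "C \<in> left_cosets G H"
    have finC: "finite C" by (rule lc_fin[OF gr H fin C])
    have "act_chain \<phi> g (f C) = (\<Sum>x\<in>C. act_chain \<phi> (g \<otimes>\<^bsub>G\<^esub> x) \<omega>)"
      unfolding f_def act_sum[OF finC]
      by (rule sum.cong[OF refl], rule act_comp[OF ha g _ scw]) (use lc_sub[OF gr H C] in blast)
    also have "\<dots> = (\<Sum>y\<in>(\<lambda>x. g \<otimes>\<^bsub>G\<^esub> x) ` C. act_chain \<phi> y \<omega>)"
      by (rule sum.reindex[OF lc_mult(3)[OF gr H g C], symmetric, unfolded o_def])
    also have "\<dots> = f (g <#\<^bsub>G\<^esub> C)" unfolding f_def lc_mult(2)[OF gr H g C] ..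
    finally show "mod_homologous l M (act_chain \<phi> g (f C)) (f (g <#\<^bsub>G\<^esub> C))"
      unfolding mod_homologous_def by (simp add: mb_0)
  qed
  have iii: "\<forall>a :: 'g set \<Rightarrow> int.
            mod_boundary l M (\<Sum>C\<in>left_cosets G H. frag_cmul (a C) (f C))
            \<longrightarrow> (\<forall>C\<in>left_cosets G H. int l dvd a C)"
  proof (intro allI impI ballI)
    fix a :: "'g set \<Rightarrow> int" and C
    assume mb: "mod_boundary l M (\<Sum>C\<in>left_cosets G H. frag_cmul (a C) (f C))"
      and C: "C \<in> left_cosets G H"
    have "(\<Sum>C\<in>left_cosets G H. frag_cmul (a C) (f C)) =
          (\<Sum>C\<in>left_cosets G H. \<Sum>x\<in>C. frag_cmul (a C) (act_chain \<phi> x \<omega>))"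
      unfolding f_def frag_cmul_sum ..
    also have "\<dots> = (\<Sum>x\<in>carrier G. frag_cmul (a (x <#\<^bsub>G\<^esub> H)) (act_chain \<phi> x \<omega>))"
      by (rule regroup[OF gr H fin])
    finally have mbx: "mod_boundary l M (\<Sum>x\<in>carrier G. frag_cmul (a (x <#\<^bsub>G\<^esub> H)) (act_chain \<phi> x \<omega>))"
      using mb by simp
    have "\<forall>x\<in>carrier G. int l dvd a (x <#\<^bsub>G\<^esub> H)"
      using spec[OF wide, of "\<lambda>x. a (x <#\<^bsub>G\<^esub> H)"] mbx by simp
    moreover obtain x where x: "x \<in> carrier G" "C = x <#\<^bsub>G\<^esub> H" using C unfolding left_cosets_def by blast
    ultimately show "int l dvd a C" by simp
  qed
  show ?thesis unfolding perm_submodule_def by (rule exI[of _ f], intro conjI i ii iii)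
qed



lemma bez_l:
  assumes "prime l" "\<not> int l dvd k"
  shows "\<exists>u t. u * k + t * int l = 1"
proof -
  have "coprime (int l) k" using prime_imp_coprime[of "int l" k] assms by (simp add: prime_nat_int_transfer)
  then have "gcd k (int l) = 1" by (simp add: coprime_iff_gcd_eq_1 gcd.commute)
  then show ?thesis using bezout_int[of k "int l"] by metis
qed

lemma abg_aux: "(z::'a::ab_group_add) = a + b \<Longrightarrow> z - (c + a) = b + - c"
  by (simp add: algebra_simps)

definition clsd :: "('x \<Rightarrow>\<^sub>0 int) set \<Rightarrow> bool" where
  "clsd W \<longleftrightarrow> (\<forall>x\<in>W. \<forall>y\<in>W. x + y \<in> W) \<and> (\<forall>x\<in>W. \<forall>k. frag_cmul k x \<in> W)"

lemma maximal_W: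
  fixes B0 :: "('x \<Rightarrow>\<^sub>0 int) set" and l :: nat
  assumes cl: "clsd B0" and z0: "0 \<in> B0" and vB: "v \<notin> B0"
    and lS: "\<forall>z\<in>S. frag_cmul (int l) z \<in> B0" and pr: "prime l"
  shows "\<exists>W. B0 \<subseteq> W \<and> clsd W \<and> v \<notin> W \<and> (\<forall>z\<in>S. \<exists>k. z - frag_cmul k v \<in> W)"
proof -
  define A where "A = {W. B0 \<subseteq> W \<and> clsd W \<and> v \<notin> W}"
  have "\<exists>W\<in>A. \<forall>X\<in>A. W \<subseteq> X \<longrightarrow> X = W"
  proof (rule Zorn_Lemma2, rule ballI)
    fix C assume C: "C \<in> chains A"
    show "\<exists>U\<in>A. \<forall>X\<in>C. X \<subseteq> U"
    proof (cases "C = {}")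
      case True
      then show ?thesis using cl vB unfolding A_def by auto
    next
      case False
      have CA: "C \<subseteq> A" and ch: "\<forall>X\<in>C. \<forall>Y\<in>C. X \<subseteq> Y \<or> Y \<subseteq> X"
        using C unfolding chains_def chain_subset_def by auto
      have "\<Union>C \<in> A" unfolding A_def clsd_def
      proof (intro CollectI conjI ballI allI)
        show "B0 \<subseteq> \<Union>C" using False CA unfolding A_def by auto
        show "v \<notin> \<Union>C" using CA unfolding A_def by auto
      next
        fix x y assume x: "x \<in> \<Union>C" and y: "y \<in> \<Union>C"
        then obtain X Y where XY: "X \<in> C" "Y \<in> C" "x \<in> X" "y \<in> Y" by auto
        show "x + y \<in> \<Union>C"
        proof (cases "X \<subseteq> Y")
          case True
          then have "x + y \<in> Y" using XY CA unfolding A_def clsd_def by blast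
          then show ?thesis using XY by auto
        next
          case False
          then have "Y \<subseteq> X" using ch XY by blast
          then have "x + y \<in> X" using XY CA unfolding A_def clsd_def by blast
          then show ?thesis using XY by auto
        qed
      next
        fix x k assume x: "x \<in> \<Union>C"
        then obtain X where X: "X \<in> C" "x \<in> X" by auto
        then have "frag_cmul k x \<in> X" using CA unfolding A_def clsd_def by blast
        then show "frag_cmul k x \<in> \<Union>C" using X by auto
      qed
      then show ?thesis by blast
    qed
  qed
  then obtain W where WA: "W \<in> A" and max: "\<forall>X\<in>A. W \<subseteq> X \<longrightarrow> X = W" by blast
  have BW: "B0 \<subseteq> W" and cW: "clsd W" and vW: "v \<notin> W" using WA unfolding A_def by auto
  have addW: "x + y \<in> W" if "x \<in> W" "y \<in> W" for x y using cW that unfolding clsd_def by blast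
  have cmW: "frag_cmul k x \<in> W" if "x \<in> W" for x k using cW that unfolding clsd_def by blast
  have ex: "\<exists>k. z - frag_cmul k v \<in> W" if zS: "z \<in> S" for z
  proof (cases "z \<in> W")
    case True
    then show ?thesis by (intro exI[of _ 0]) simp
  next
    case False
    define W' where "W' = {w + frag_cmul k z | w k. w \<in> W}"
    have WW': "W \<subseteq> W'"
    proof
      fix x assume "x \<in> W"
      moreover have "x = x + frag_cmul 0 z" by simp
      ultimately show "x \<in> W'" unfolding W'_def by blast
    qed
    have zW': "z \<in> W'" unfolding W'_def using z0 BW by (auto intro!: exI[of _ 0] exI[of _ 1])
    have cW': "clsd W'" unfolding clsd_def
    proof (intro conjI ballI allI)
      fix x y assume "x \<in> W'" "y \<in> W'"
      then obtain w1 k1 w2 k2 where "w1 \<in> W" "w2 \<in> W" "x = w1 + frag_cmul k1 z" "y = w2 + frag_cmul k2 z"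
        unfolding W'_def by auto
      then have "x + y = (w1 + w2) + frag_cmul (k1 + k2) z" "w1 + w2 \<in> W"
        by (auto simp: frag_cmul_distrib addW)
      then show "x + y \<in> W'" unfolding W'_def by blast
    next
      fix x c assume "x \<in> W'"
      then obtain w k where "w \<in> W" "x = w + frag_cmul k z" unfolding W'_def by auto
      then have "frag_cmul c x = frag_cmul c w + frag_cmul (c * k) z" "frag_cmul c w \<in> W"
        by (auto simp: frag_cmul_distrib2 cmW)
      then show "frag_cmul c x \<in> W'" unfolding W'_def by blast
    qed
    have "v \<in> W'"
    proof (rule ccontr)
      assume "v \<notin> W'"
      then have "W' \<in> A" using BW WW' cW' unfolding A_def by auto
      then have "W' = W" using max WW' by blast
      then show False using zW' False by simp
    qed
    then obtain w k where w: "w \<in> W" "v = w + frag_cmul k z" unfolding W'_def by auto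
    have lzW: "frag_cmul (int l) z \<in> W" using lS zS BW by blast
    have ndv: "\<not> int l dvd k"
    proof
      assume "int l dvd k"
      then obtain m where "k = int l * m" by (auto elim: dvdE)
      then have "frag_cmul k z = frag_cmul m (frag_cmul (int l) z)" by (simp add: mult.commute)
      then have "frag_cmul k z \<in> W" using cmW[OF lzW, of m] by simp
      then have "v \<in> W" using w addW by simp
      then show False using vW by simp
    qed
    obtain u t where ut: "u * k + t * int l = 1" using bez_l[OF pr ndv] by blast
    have "z = frag_cmul (u * k + t * int l) z" using ut by simp
    also have "\<dots> = frag_cmul (u * k) z + frag_cmul t (frag_cmul (int l) z)"
      by (simp add: frag_cmul_distrib)
    finally have "z - frag_cmul u v = frag_cmul t (frag_cmul (int l) z) + frag_cmul (- u) w"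
      using w(2) by (simp add: frag_cmul_distrib2 abg_aux)
    moreover have "frag_cmul t (frag_cmul (int l) z) + frag_cmul (- u) w \<in> W"
      using addW cmW lzW w(1) by blast
    ultimately show ?thesis by metis
  qed
  show ?thesis using BW cW vW ex by blast
qed



lemma (in group) g_aux1: "g \<in> carrier G \<Longrightarrow> x \<in> carrier G \<Longrightarrow> inv (g \<otimes> x) \<otimes> g = inv x"
  by (simp add: inv_mult_group m_assoc)

lemma (in group) g_aux2: "y \<in> carrier G \<Longrightarrow> r \<in> carrier G \<Longrightarrow> inv y \<otimes> r = \<one> \<longleftrightarrow> r = y"
  using inv_solve_left[of "\<one>" y r] by auto

lemma cmul_diff2: "frag_cmul c (a - b) = frag_cmul c a - frag_cmul c b"
  by (rule poly_mapping_eqI) (simp add: lookup_minus algebra_simps)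

lemma abg2: "(w::'a::ab_group_add) = b + s \<Longrightarrow> w + - s = b"
  by simp

lemma dvd_sum_diff:
  assumes "\<And>x. x \<in> C \<Longrightarrow> (d::int) dvd (A x - B x)"
  shows "d dvd (sum A C - sum B C)"
  unfolding sum_subtractf[symmetric] by (rule dvd_sum) (use assms in blast)

lemma quot:
  assumes gr: "group G" and fin: "finite (carrier G)" and ha: "homeo_action G M \<phi>"
    and H: "subgroup H G" and om: "mod_cycle l M \<omega>" and pr: "prime l"
    and wide: "\<forall>a :: 'g \<Rightarrow> int.
           mod_boundary l M (\<Sum>g\<in>carrier G. frag_cmul (a g) (act_chain \<phi> g \<omega>))
           \<longrightarrow> (\<forall>g\<in>carrier G. int l dvd a g)"
  shows "perm_quotient l G H M \<phi>"
proof -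
  have scw: "singular_chain 1 M \<omega>" using om unfolding mod_cycle_def by simp
  have one: "\<one>\<^bsub>G\<^esub> \<in> carrier G" by (simp add: gr group.is_monoid monoid.one_closed)
  have invc: "inv\<^bsub>G\<^esub> x \<in> carrier G" if "x \<in> carrier G" for x by (simp add: gr group.inv_closed that)
  have mc: "x \<otimes>\<^bsub>G\<^esub> y \<in> carrier G" if "x \<in> carrier G" "y \<in> carrier G" for x y
    by (simp add: gr group.is_monoid monoid.m_closed that)
  define G1 where "G1 = carrier G - {\<one>\<^bsub>G\<^esub>}"
  have finG1: "finite G1" using fin unfolding G1_def by simp
  define B0 where "B0 = {b + (\<Sum>g\<in>G1. frag_cmul (a g) (act_chain \<phi> g \<omega>)) | b a. mod_boundary l M b}"
  have B0I: "b + (\<Sum>g\<in>G1. frag_cmul (a g) (act_chain \<phi> g \<omega>)) \<in> B0" if "mod_boundary l M b" for b a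
    unfolding B0_def using that by blast
  have clB0: "clsd B0" unfolding clsd_def
  proof (intro conjI ballI allI)
    fix x y assume "x \<in> B0" "y \<in> B0"
    then obtain b1 a1 b2 a2 where h: "mod_boundary l M b1" "mod_boundary l M b2"
      "x = b1 + (\<Sum>g\<in>G1. frag_cmul (a1 g) (act_chain \<phi> g \<omega>))"
      "y = b2 + (\<Sum>g\<in>G1. frag_cmul (a2 g) (act_chain \<phi> g \<omega>))" unfolding B0_def by blast
    have "x + y = (b1 + b2) + (\<Sum>g\<in>G1. frag_cmul (a1 g + a2 g) (act_chain \<phi> g \<omega>))"
      unfolding h by (simp add: frag_cmul_distrib sum.distrib algebra_simps)
    then show "x + y \<in> B0" using B0I[OF mb_add[OF h(1,2)]] by simp
  next
    fix x c assume "x \<in> B0"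
    then obtain b a where h: "mod_boundary l M b"
      "x = b + (\<Sum>g\<in>G1. frag_cmul (a g) (act_chain \<phi> g \<omega>))" unfolding B0_def by blast
    have "frag_cmul c x = frag_cmul c b + (\<Sum>g\<in>G1. frag_cmul (c * a g) (act_chain \<phi> g \<omega>))"
      unfolding h by (simp add: frag_cmul_distrib2 frag_cmul_sum)
    then show "frag_cmul c x \<in> B0" using B0I[OF mb_cmul[OF h(1)]] by simp
  qed
  have mbB0: "b \<in> B0" if "mod_boundary l M b" for b
    using B0I[OF that, of "\<lambda>_. 0"] by simp
  have z0: "0 \<in> B0" by (rule mbB0[OF mb_0])
  have gB0: "act_chain \<phi> g \<omega> \<in> B0" if "g \<in> G1" for g
  proof -
    have "(\<Sum>h\<in>G1. frag_cmul (if h = g then 1 else 0) (act_chain \<phi> h \<omega>)) =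
          (\<Sum>h\<in>G1. if h = g then act_chain \<phi> h \<omega> else 0)"
      by (rule sum.cong) auto
    also have "\<dots> = act_chain \<phi> g \<omega>" using finG1 that by simp
    finally show ?thesis using B0I[OF mb_0, of "\<lambda>h. if h = g then 1 else 0"] by simp
  qed
  have vB0: "\<omega> \<notin> B0"
  proof
    assume "\<omega> \<in> B0"
    then obtain b a where h: "mod_boundary l M b"
      "\<omega> = b + (\<Sum>g\<in>G1. frag_cmul (a g) (act_chain \<phi> g \<omega>))" unfolding B0_def by blast
    define a' where "a' g = (if g = \<one>\<^bsub>G\<^esub> then 1 else - a g)" for g
    have "(\<Sum>g\<in>carrier G. frag_cmul (a' g) (act_chain \<phi> g \<omega>)) =
          frag_cmul (a' \<one>\<^bsub>G\<^esub>) (act_chain \<phi> \<one>\<^bsub>G\<^esub> \<omega>) + (\<Sum>g\<in>G1. frag_cmul (a' g) (act_chain \<phi> g \<omega>))"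
      unfolding G1_def by (rule sum.remove[OF fin one])
    also have "\<dots> = \<omega> + (\<Sum>g\<in>G1. - frag_cmul (a g) (act_chain \<phi> g \<omega>))"
      using act_one[OF ha scw] by (simp add: a'_def G1_def)
    also have "\<dots> = b" unfolding sum_negf by (rule abg2[OF h(2)])
    finally have "int l dvd a' \<one>\<^bsub>G\<^esub>" using spec[OF wide, of a'] h(1) one by simp
    then have "l = 1" by (simp add: a'_def)
    then show False using pr by simp
  qed
  have lS: "\<forall>z\<in>{z. singular_chain 1 M z}. frag_cmul (int l) z \<in> B0"
    using mbB0 mb_l by blast
  obtain W where BW: "B0 \<subseteq> W" and cW: "clsd W" and vW: "\<omega> \<notin> W"
    and ex: "\<forall>z\<in>{z. singular_chain 1 M z}. \<exists>k. z - frag_cmul k \<omega> \<in> W"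
    using maximal_W[OF clB0 z0 vB0 lS pr] by blast
  have addW: "x + y \<in> W" if "x \<in> W" "y \<in> W" for x y using cW that unfolding clsd_def by blast
  have cmW: "frag_cmul k x \<in> W" if "x \<in> W" for x k using cW that unfolding clsd_def by blast
  define P where "P z k \<longleftrightarrow> z - frag_cmul k \<omega> \<in> W" for z k
  define lam where "lam z = (SOME k. P z k)" for z
  have lamP: "P z (lam z)" if "singular_chain 1 M z" for z
    unfolding lam_def by (rule someI_ex) (use ex that in \<open>simp add: P_def\<close>)
  have Padd: "P (x + y) (k + k')" if "P x k" "P y k'" for x y k k'
  proof -
    have "x + y - frag_cmul (k + k') \<omega> = (x - frag_cmul k \<omega>) + (y - frag_cmul k' \<omega>)"
      by (simp add: frag_cmul_distrib algebra_simps)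
    then show ?thesis using that addW unfolding P_def by metis
  qed
  have Pcmul: "P (frag_cmul c x) (c * k)" if "P x k" for x k c
  proof -
    have "frag_cmul c x - frag_cmul (c * k) \<omega> = frag_cmul c (x - frag_cmul k \<omega>)"
      by (simp add: cmul_diff2)
    then show ?thesis using that cmW unfolding P_def by metis
  qed
  have P0: "P 0 0" unfolding P_def using z0 BW by auto
  have Psum: "P (\<Sum>i\<in>I. x i) (\<Sum>i\<in>I. k i)" if "finite I" "\<forall>i\<in>I. P (x i) (k i)" for I and x :: "'g set \<Rightarrow> _" and k
    using that
  proof (induction I rule: finite_induct)
    case empty then show ?case using P0 by simp
  next
    case (insert a F) then show ?case using Padd by simp
  qed
  have Uniq: "int l dvd k - k'" if "P x k" "P x k'" for x k k'
  proof (rule ccontr)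
    assume nd: "\<not> int l dvd k - k'"
    have "frag_cmul (k - k') \<omega> = (x - frag_cmul k' \<omega>) + frag_cmul (-1) (x - frag_cmul k \<omega>)"
      by (simp add: frag_cmul_diff_distrib)
    then have dW: "frag_cmul (k - k') \<omega> \<in> W" using that addW cmW unfolding P_def by metis
    obtain u t where ut: "u * (k - k') + t * int l = 1" using bez_l[OF pr nd] by blast
    have "\<omega> = frag_cmul (u * (k - k') + t * int l) \<omega>" using ut by simp
    also have "\<dots> = frag_cmul u (frag_cmul (k - k') \<omega>) + frag_cmul t (frag_cmul (int l) \<omega>)"
      by (simp add: frag_cmul_distrib)
    finally have "\<omega> \<in> W" using addW cmW dW lS scw BW by (metis mem_Collect_eq subsetD)
    then show False using vW by simp
  qed
  have Pb: "P b 0" if "mod_boundary l M b" for b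
    using mbB0[OF that] BW unfolding P_def by auto
  have Pg: "P (act_chain \<phi> g \<omega>) 0" if "g \<in> G1" for g
    using gB0[OF that] BW unfolding P_def by auto
  have P1: "P \<omega> 1" unfolding P_def using z0 BW by auto
  have scz: "singular_chain 1 M z" if "mod_cycle l M z" for z using that unfolding mod_cycle_def by simp
  define q where "q z C = (\<Sum>x\<in>C. lam (act_chain \<phi> (inv\<^bsub>G\<^esub> x) z))" for z C
  have C1: "\<forall>z w. mod_cycle l M z \<longrightarrow> mod_cycle l M w \<longrightarrow>
            (\<forall>C\<in>left_cosets G H. int l dvd (q (z + w) C - (q z C + q w C)))"
  proof (intro allI impI ballI)
    fix z w C assume z: "mod_cycle l M z" and w: "mod_cycle l M w" and C: "C \<in> left_cosets G H"
    have "q z C + q w C = (\<Sum>x\<in>C. lam (act_chain \<phi> (inv\<^bsub>G\<^esub> x) z) + lam (act_chain \<phi> (inv\<^bsub>G\<^esub> x) w))"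
      unfolding q_def by (simp add: sum.distrib)
    moreover have "int l dvd (q (z + w) C - \<dots>)"
      unfolding q_def
    proof (rule dvd_sum_diff)
      fix x assume "x \<in> C"
      then have xi: "inv\<^bsub>G\<^esub> x \<in> carrier G" using lc_sub[OF gr H C] invc by blast
      have s1: "singular_chain 1 M (act_chain \<phi> (inv\<^bsub>G\<^esub> x) z)" by (rule act_sc[OF ha xi scz[OF z]])
      have s2: "singular_chain 1 M (act_chain \<phi> (inv\<^bsub>G\<^esub> x) w)" by (rule act_sc[OF ha xi scz[OF w]])
      have s3: "singular_chain 1 M (act_chain \<phi> (inv\<^bsub>G\<^esub> x) (z + w))"
        by (rule act_sc[OF ha xi singular_chain_add[OF scz[OF z] scz[OF w]]])
      show "int l dvd lam (act_chain \<phi> (inv\<^bsub>G\<^esub> x) (z + w)) -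
            (lam (act_chain \<phi> (inv\<^bsub>G\<^esub> x) z) + lam (act_chain \<phi> (inv\<^bsub>G\<^esub> x) w))"
        by (rule Uniq[OF lamP[OF s3]]) (unfold act_add, rule Padd[OF lamP[OF s1] lamP[OF s2]])
    qed
    ultimately show "int l dvd (q (z + w) C - (q z C + q w C))" by simp
  qed
  have C2: "\<forall>b. mod_boundary l M b \<longrightarrow> (\<forall>C\<in>left_cosets G H. int l dvd q b C)"
  proof (intro allI impI ballI)
    fix b C assume b: "mod_boundary l M b" and C: "C \<in> left_cosets G H"
    show "int l dvd q b C" unfolding q_def
    proof (rule dvd_sum)
      fix x assume "x \<in> C"
      then have xi: "inv\<^bsub>G\<^esub> x \<in> carrier G" using lc_sub[OF gr H C] invc by blast
      have m: "mod_boundary l M (act_chain \<phi> (inv\<^bsub>G\<^esub> x) b)" by (rule act_mb[OF ha xi b])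
      show "int l dvd lam (act_chain \<phi> (inv\<^bsub>G\<^esub> x) b)"
        using Uniq[OF lamP[OF mb_sc[OF m]] Pb[OF m]] by simp
    qed
  qed
  have C3: "\<forall>g\<in>carrier G. \<forall>z. mod_cycle l M z \<longrightarrow>
            (\<forall>C\<in>left_cosets G H. int l dvd (q (act_chain \<phi> g z) (g <#\<^bsub>G\<^esub> C) - q z C))"
  proof (intro allI impI ballI)
    fix g z C assume g: "g \<in> carrier G" and z: "mod_cycle l M z" and C: "C \<in> left_cosets G H"
    have "q (act_chain \<phi> g z) (g <#\<^bsub>G\<^esub> C) =
          (\<Sum>y\<in>(\<lambda>x. g \<otimes>\<^bsub>G\<^esub> x) ` C. lam (act_chain \<phi> (inv\<^bsub>G\<^esub> y) (act_chain \<phi> g z)))"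
      unfolding q_def lc_mult(2)[OF gr H g C] ..
    also have "\<dots> = (\<Sum>x\<in>C. lam (act_chain \<phi> (inv\<^bsub>G\<^esub> (g \<otimes>\<^bsub>G\<^esub> x)) (act_chain \<phi> g z)))"
      by (rule sum.reindex[OF lc_mult(3)[OF gr H g C], unfolded o_def])
    also have "\<dots> = q z C" unfolding q_def
    proof (rule sum.cong[OF refl])
      fix x assume "x \<in> C"
      then have x: "x \<in> carrier G" using lc_sub[OF gr H C] by blast
      have "act_chain \<phi> (inv\<^bsub>G\<^esub> (g \<otimes>\<^bsub>G\<^esub> x)) (act_chain \<phi> g z) =
            act_chain \<phi> (inv\<^bsub>G\<^esub> (g \<otimes>\<^bsub>G\<^esub> x) \<otimes>\<^bsub>G\<^esub> g) z"
        by (rule act_comp[OF ha invc[OF mc[OF g x]] g scz[OF z]])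
      also have "\<dots> = act_chain \<phi> (inv\<^bsub>G\<^esub> x) z" by (simp add: group.g_aux1[OF gr g x])
      finally show "lam (act_chain \<phi> (inv\<^bsub>G\<^esub> (g \<otimes>\<^bsub>G\<^esub> x)) (act_chain \<phi> g z)) =
                    lam (act_chain \<phi> (inv\<^bsub>G\<^esub> x) z)" by simp
    qed
    finally show "int l dvd (q (act_chain \<phi> g z) (g <#\<^bsub>G\<^esub> C) - q z C)" by simp
  qed
  have C4: "\<forall>x :: 'g set \<Rightarrow> int. \<exists>z. mod_cycle l M z \<and>
            (\<forall>C\<in>left_cosets G H. int l dvd (q z C - x C))"
  proof
    fix x :: "'g set \<Rightarrow> int"
    define rep where "rep C = (SOME y. y \<in> C)" for C :: "'g set"
    have repC: "rep C \<in> C" if CC: "C \<in> left_cosets G H" for C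
    proof -
      obtain y where "y \<in> carrier G" "C = y <#\<^bsub>G\<^esub> H" using CC unfolding left_cosets_def by blast
      then have "y \<in> C" using lc_self[OF gr H] by simp
      then show ?thesis unfolding rep_def by (rule someI)
    qed
    have repG: "rep C \<in> carrier G" if "C \<in> left_cosets G H" for C
      using repC[OF that] lc_sub[OF gr H that] by blast
    define z where "z = (\<Sum>C'\<in>left_cosets G H. frag_cmul (x C') (act_chain \<phi> (rep C') \<omega>))"
    have zc: "mod_cycle l M z" unfolding z_def
      by (rule mc_sum, rule mc_cmul, rule act_mc[OF ha repG om])
    have "int l dvd (q z C - x C)" if C: "C \<in> left_cosets G H" for C
    proof -
      have "(\<Sum>y\<in>C. if y = rep C then x C else 0) = x C"
        using repC[OF C] lc_fin[OF gr H fin C] by simp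
      moreover have "int l dvd (q z C - (\<Sum>y\<in>C. if y = rep C then x C else 0))"
        unfolding q_def
      proof (rule dvd_sum_diff)
        fix y assume yC: "y \<in> C"
        have y: "y \<in> carrier G" using yC lc_sub[OF gr H C] by blast
        have e1: "act_chain \<phi> (inv\<^bsub>G\<^esub> y) z =
          (\<Sum>C'\<in>left_cosets G H. frag_cmul (x C') (act_chain \<phi> (inv\<^bsub>G\<^esub> y \<otimes>\<^bsub>G\<^esub> rep C') \<omega>))"
          unfolding z_def act_sum[OF lcs_fin[OF fin]] act_cmul
          by (rule sum.cong[OF refl]) (simp add: act_comp[OF ha invc[OF y] repG scw])
        have Pi: "P (act_chain \<phi> (inv\<^bsub>G\<^esub> y \<otimes>\<^bsub>G\<^esub> rep C') \<omega>) (if y = rep C' then 1 else 0)"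
          if C': "C' \<in> left_cosets G H" for C'
        proof (cases "y = rep C'")
          case True
          then have "inv\<^bsub>G\<^esub> y \<otimes>\<^bsub>G\<^esub> rep C' = \<one>\<^bsub>G\<^esub>" using group.g_aux2[OF gr y repG[OF C']] by simp
          then show ?thesis using True P1 act_one[OF ha scw] by simp
        next
          case False
          then have "inv\<^bsub>G\<^esub> y \<otimes>\<^bsub>G\<^esub> rep C' \<in> G1"
            using group.g_aux2[OF gr y repG[OF C']] mc[OF invc[OF y] repG[OF C']] unfolding G1_def by simp
          then show ?thesis using False Pg by simp
        qed
        have "P (act_chain \<phi> (inv\<^bsub>G\<^esub> y) z)
                (\<Sum>C'\<in>left_cosets G H. x C' * (if y = rep C' then 1 else 0))"
          unfolding e1 by (rule Psum[OF lcs_fin[OF fin]]) (use Pcmul Pi in blast)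
        moreover have "(\<Sum>C'\<in>left_cosets G H. x C' * (if y = rep C' then 1 else 0)) =
                       (\<Sum>C'\<in>left_cosets G H. if C' = C then (if y = rep C then x C else 0) else 0)"
        proof (rule sum.cong[OF refl])
          fix C' assume C': "C' \<in> left_cosets G H"
          show "x C' * (if y = rep C' then 1 else 0) = (if C' = C then (if y = rep C then x C else 0) else 0)"
          proof (cases "C' = C")
            case False
            have "y \<noteq> rep C'"
            proof
              assume "y = rep C'"
              then have "y \<in> C'" using repC[OF C'] by simp
              then have "C' = C" using lc_eq[OF gr H C' ] lc_eq[OF gr H C yC] by simp
              then show False using False by simp
            qed
            then show ?thesis using False by simp
          qed simp
        qed
        moreover have "\<dots> = (if y = rep C then x C else 0)" using C lcs_fin[OF fin] by simp
        ultimately have "P (act_chain \<phi> (inv\<^bsub>G\<^esub> y) z) (if y = rep C then x C else 0)" by simp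
        then show "int l dvd lam (act_chain \<phi> (inv\<^bsub>G\<^esub> y) z) - (if y = rep C then x C else 0)"
          by (rule Uniq[OF lamP[OF act_sc[OF ha invc[OF y] scz[OF zc]]]])
      qed
      ultimately show ?thesis by simp
    qed
    then show "\<exists>z. mod_cycle l M z \<and> (\<forall>C\<in>left_cosets G H. int l dvd (q z C - x C))"
      using zc by blast
  qed
  show ?thesis unfolding perm_quotient_def by (rule exI[of _ q], intro conjI C1 C2 C3 C4)
qed


theorem lemma7p2:
  fixes G :: "('g, 'b) monoid_scheme"
    and M :: "'a topology"
    and \<phi> :: "'g \<Rightarrow> 'a \<Rightarrow> 'a"
    and l :: nat
  assumes "group G" and "finite (carrier G)"
    and "closed_connected_manifold M"
    and "homeo_action G M \<phi>"
    and "prime l"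
    and "homologically_wide l G M \<phi>"
  shows "\<forall>H1. subgroup H1 G \<longrightarrow>
           perm_submodule l G H1 M \<phi> \<and>
           (\<not> l dvd card (carrier G) \<longrightarrow> perm_quotient l G H1 M \<phi>)"
proof (intro allI impI)
  fix H1 assume H: "subgroup H1 G"
  obtain \<omega> where om: "mod_cycle l M \<omega>" and wide: "\<forall>a :: 'g \<Rightarrow> int.
           mod_boundary l M (\<Sum>g\<in>carrier G. frag_cmul (a g) (act_chain \<phi> g \<omega>))
           \<longrightarrow> (\<forall>g\<in>carrier G. int l dvd a g)"
    using assms(6) unfolding homologically_wide_def by blast
  show "perm_submodule l G H1 M \<phi> \<and>
           (\<not> l dvd card (carrier G) \<longrightarrow> perm_quotient l G H1 M \<phi>)"
    using submod[OF assms(1,2,4) H om wide] quot[OF assms(1,2,4) H om assms(5) wide] by blast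
qed

end
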